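(* Let $d\ge2$ be an integer and, for real $b,c$, let $$\rho_{bc}=a\sum_{i=0}^{d-1}|ii\rangle\langle ii|+b\sum_{i<j}|\psi^-_{ij}\rangle\langle\psi^-_{ij}|+c\sum_{i<j}|\psi^+_{ij}\rangle\langle\psi^+_{ij}|,\quad a=\frac1d\Big(1-(b+c)\frac{d(d-1)}2\Big).$$ If $(b,c)$ lies in the convex hull of the four points $B=\big(\tfrac{1}{d(d-1)},0\big)$, $C=\big(\tfrac{4}{d(3d-2)},0\big)$, $G=\big(\tfrac{3}{d(2d-1)},\tfrac{1}{d(2d-1)}\big)$, $K=\big(\tfrac1{d(d-1)},\tfrac1{d(d-1)}\big)$ in the $(b,c)$-plane, then $\rho_{bc}$ is pseudo one-copy undistillable, i.e. $\langle\phi|\rho_{bc}^{PT}|\phi\rangle\ge0$ for all $|\phi\rangle\in\mathbb{C}^d\otimes\mathbb{C}^d$ of Schmidt rank two.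
   Context: $|\psi^{\pm}_{ij}\rangle=\frac1{\sqrt2}(|ij\rangle\pm|ji\rangle)$, sums over $0\le i<j\le d-1$. $X^{PT}$ is the partial transpose on the second factor, $\langle ij|X^{PT}|kl\rangle=\langle il|X|kj\rangle$. *)

theory Defs
  imports "HOL-Analysis.Analysis" "HOL-Library.Complex_Order"
begin

text \<open>Vectors in C^d (x) C^d are functions on index pairs (i,j), i,j < d;
  operators are kernels (i,j) -> (k,l) -> complex, i.e. X (i,j) (k,l) = <ij|X|kl>.\<close>

type_synonym bivec = "nat \<times> nat \<Rightarrow> complex"
type_synonym biop = "nat \<times> nat \<Rightarrow> nat \<times> nat \<Rightarrow> complex"

definition ket :: "nat \<Rightarrow> nat \<Rightarrow> bivec" where
  "ket i j = (\<lambda>x. if x = (i, j) then 1 else 0)"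

definition psi_plus :: "nat \<Rightarrow> nat \<Rightarrow> bivec" where
  "psi_plus i j = (\<lambda>x. (ket i j x + ket j i x) / complex_of_real (sqrt 2))"

definition psi_minus :: "nat \<Rightarrow> nat \<Rightarrow> bivec" where
  "psi_minus i j = (\<lambda>x. (ket i j x - ket j i x) / complex_of_real (sqrt 2))"

definition proj :: "bivec \<Rightarrow> biop" where
  "proj v = (\<lambda>x y. v x * cnj (v y))"

definition rho_bc :: "nat \<Rightarrow> real \<Rightarrow> real \<Rightarrow> biop" where
  "rho_bc d b c = (\<lambda>x y.
     (let a = (1 / real d) * (1 - (b + c) * (real d * (real d - 1) / 2)) in
        complex_of_real a * (\<Sum>i<d. proj (ket i i) x y)
      + complex_of_real b * (\<Sum>i<d. \<Sum>j\<in>{i<..<d}. proj (psi_minus i j) x y)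
      + complex_of_real c * (\<Sum>i<d. \<Sum>j\<in>{i<..<d}. proj (psi_plus i j) x y)))"

definition partial_transpose :: "biop \<Rightarrow> biop" where
  "partial_transpose X = (\<lambda>(i, j) (k, l). X (i, l) (k, j))"

definition qform :: "nat \<Rightarrow> biop \<Rightarrow> bivec \<Rightarrow> complex" where
  "qform d X \<phi> = (\<Sum>x\<in>{0..<d} \<times> {0..<d}. \<Sum>y\<in>{0..<d} \<times> {0..<d}. cnj (\<phi> x) * X x y * \<phi> y)"

definition schmidt_rank :: "nat \<Rightarrow> bivec \<Rightarrow> nat" where
  "schmidt_rank d \<phi> = (LEAST r. \<exists>u v :: nat \<Rightarrow> nat \<Rightarrow> complex.
      \<forall>i<d. \<forall>j<d. \<phi> (i, j) = (\<Sum>k<r. u k i * v k j))"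

end

theory Submission
  imports Defs
begin
lemma s2: "sqrt 2 * sqrt 2 = (2::real)" by (simp only: real_sqrt_mult_self abs_numeral)

lemma ofr_bool: "complex_of_real (of_bool P) = of_bool P" by (cases P) simp_all

lemma psi_minus_val: "psi_minus i j x = complex_of_real ((of_bool (x = (i,j)) - of_bool (x = (j,i))) / sqrt 2)"
  unfolding psi_minus_def ket_def of_real_divide of_real_diff ofr_bool by (simp only: of_bool_def)
lemma psi_plus_val: "psi_plus i j x = complex_of_real ((of_bool (x = (i,j)) + of_bool (x = (j,i))) / sqrt 2)"
  unfolding psi_plus_def ket_def of_real_divide of_real_add ofr_bool by (simp only: of_bool_def)

lemma rdiv: "(a / sqrt 2) * (b / sqrt 2) = a * b / (2::real)"
  by (simp only: times_divide_times_eq s2)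

lemma proj_minus:
  "proj (psi_minus i j) x y = complex_of_real ((of_bool (x = (i,j)) - of_bool (x = (j,i))) * (of_bool (y = (i,j)) - of_bool (y = (j,i))) / 2)"
  unfolding proj_def psi_minus_val complex_cnj_complex_of_real of_real_mult[symmetric] rdiv ..
lemma proj_plus:
  "proj (psi_plus i j) x y = complex_of_real ((of_bool (x = (i,j)) + of_bool (x = (j,i))) * (of_bool (y = (i,j)) + of_bool (y = (j,i))) / 2)"
  unfolding proj_def psi_plus_val complex_cnj_complex_of_real of_real_mult[symmetric] rdiv ..

lemma dsum_delta:
  "(\<Sum>i<(d::nat). \<Sum>j\<in>{i<..<d}. of_bool ((i,j) = (x,y)) * c) = of_bool (x < y \<and> y < d) * (c::real)"
proof -
  have "(\<Sum>i<d. \<Sum>j\<in>{i<..<d}. of_bool ((i,j) = (x,y)) * c) =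
        (\<Sum>w\<in>Sigma {..<d} (\<lambda>i. {i<..<d}). (if w = (x,y) then c else 0))"
    apply (subst sum.Sigma)
      apply simp
     apply simp
    apply (rule sum.cong)
     apply auto
    done
  also have "\<dots> = of_bool (x < y \<and> y < d) * c"
    by (subst sum.delta) auto
  finally show ?thesis .
qed

lemma sum_minus:
  assumes "p < d" "q < d"
  shows "(\<Sum>i<d. \<Sum>j\<in>{i<..<d}. proj (psi_minus i j) (p,q) (r,s)) =
     complex_of_real (of_bool (p \<noteq> q) * ((of_bool ((r,s) = (p,q)) - of_bool ((r,s) = (q,p))) / 2))"
proof -
  define K :: real where "K = (of_bool ((r,s) = (p,q)) - of_bool ((r,s) = (q,p))) / 2"
  have pt: "(of_bool ((p,q) = (i,j)) - of_bool ((p,q) = (j,i))) * (of_bool ((r,s) = (i,j)) - of_bool ((r,s) = (j,i))) / 2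
     = of_bool ((i,j) = (p,q)) * K + of_bool ((i,j) = (q,p)) * K" if "i < j" for i j :: nat
    using that unfolding K_def by (auto simp: of_bool_def)
  have "(\<Sum>i<d. \<Sum>j\<in>{i<..<d}. proj (psi_minus i j) (p,q) (r,s)) =
     complex_of_real (\<Sum>i<d. \<Sum>j\<in>{i<..<d}. of_bool ((i,j) = (p,q)) * K + of_bool ((i,j) = (q,p)) * K)"
  proof -
    have pw: "proj (psi_minus i j) (p,q) (r,s) = complex_of_real (of_bool ((i,j) = (p,q)) * K + of_bool ((i,j) = (q,p)) * K)"
      if "i < j" for i j
      unfolding proj_minus using pt[OF that] by simp
    show ?thesis unfolding of_real_sum by (intro sum.cong refl) (rule pw, simp)
  qed
  also have "(\<Sum>i<d. \<Sum>j\<in>{i<..<d}. of_bool ((i,j) = (p,q)) * K + of_bool ((i,j) = (q,p)) * K)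
     = of_bool (p \<noteq> q) * K"
    unfolding sum.distrib dsum_delta using assms by (cases "p < q"; cases "q < p"; simp)
  finally show ?thesis unfolding K_def .
qed

lemma sum_plus:
  assumes "p < d" "q < d"
  shows "(\<Sum>i<d. \<Sum>j\<in>{i<..<d}. proj (psi_plus i j) (p,q) (r,s)) =
     complex_of_real (of_bool (p \<noteq> q) * ((of_bool ((r,s) = (p,q)) + of_bool ((r,s) = (q,p))) / 2))"
proof -
  define K :: real where "K = (of_bool ((r,s) = (p,q)) + of_bool ((r,s) = (q,p))) / 2"
  have pt: "(of_bool ((p,q) = (i,j)) + of_bool ((p,q) = (j,i))) * (of_bool ((r,s) = (i,j)) + of_bool ((r,s) = (j,i))) / 2
     = of_bool ((i,j) = (p,q)) * K + of_bool ((i,j) = (q,p)) * K" if "i < j" for i j :: nat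
    using that unfolding K_def by (auto simp: of_bool_def)
  have "(\<Sum>i<d. \<Sum>j\<in>{i<..<d}. proj (psi_plus i j) (p,q) (r,s)) =
     complex_of_real (\<Sum>i<d. \<Sum>j\<in>{i<..<d}. of_bool ((i,j) = (p,q)) * K + of_bool ((i,j) = (q,p)) * K)"
  proof -
    have pw: "proj (psi_plus i j) (p,q) (r,s) = complex_of_real (of_bool ((i,j) = (p,q)) * K + of_bool ((i,j) = (q,p)) * K)"
      if "i < j" for i j
      unfolding proj_plus using pt[OF that] by simp
    show ?thesis unfolding of_real_sum by (intro sum.cong refl) (rule pw, simp)
  qed
  also have "(\<Sum>i<d. \<Sum>j\<in>{i<..<d}. of_bool ((i,j) = (p,q)) * K + of_bool ((i,j) = (q,p)) * K)
     = of_bool (p \<noteq> q) * K"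
    unfolding sum.distrib dsum_delta using assms by (cases "p < q"; cases "q < p"; simp)
  finally show ?thesis unfolding K_def .
qed

lemma sum_ket:
  assumes "p < d"
  shows "(\<Sum>i<d. proj (ket i i) (p,q) (r,s)) = complex_of_real (of_bool (p = q \<and> r = p \<and> s = p))"
proof -
  have "(\<Sum>i<d. proj (ket i i) (p,q) (r,s)) = (\<Sum>i<d. if i = p then complex_of_real (of_bool (p = q \<and> r = p \<and> s = p)) else 0)"
    unfolding proj_def ket_def by (intro sum.cong) auto
  then show ?thesis using assms by simp
qed


definition acoef :: "nat \<Rightarrow> real \<Rightarrow> real \<Rightarrow> real" where
  "acoef d b c = (1 / real d) * (1 - (b + c) * (real d * (real d - 1) / 2))"

lemma pt_entry:
  assumes "i < d" "j < d" "k < d" "l < d"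
  shows "partial_transpose (rho_bc d b c) (i,j) (k,l) = complex_of_real
     ((acoef d b c - c) * of_bool ((i,j) = (k,l) \<and> i = j) + ((b + c) / 2) * of_bool ((i,j) = (k,l))
      + ((c - b) / 2) * of_bool (i = j \<and> k = l))"
proof -
  have "partial_transpose (rho_bc d b c) (i,j) (k,l) = complex_of_real
     (acoef d b c * of_bool (i = l \<and> k = i \<and> j = i)
      + b * (of_bool (i \<noteq> l) * ((of_bool ((k,j) = (i,l)) - of_bool ((k,j) = (l,i))) / 2))
      + c * (of_bool (i \<noteq> l) * ((of_bool ((k,j) = (i,l)) + of_bool ((k,j) = (l,i))) / 2)))"
    unfolding partial_transpose_def rho_bc_def Let_def acoef_def
    using assms by (simp only: sum_ket sum_minus sum_plus of_real_add of_real_mult prod.case)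
  also have "\<dots> = complex_of_real
     ((acoef d b c - c) * of_bool ((i,j) = (k,l) \<and> i = j) + ((b + c) / 2) * of_bool ((i,j) = (k,l))
      + ((c - b) / 2) * of_bool (i = j \<and> k = l))"
    by (auto simp: of_bool_def field_simps)
  finally show ?thesis .
qed


lemma diag_sum:
  fixes h :: "nat \<times> nat \<Rightarrow> 'a::comm_ring_1"
  shows "(\<Sum>x\<in>{0..<d}\<times>{0..<d}. of_bool (fst x = snd x) * h x) = (\<Sum>i<d. h (i,i))"
proof -
  have "(\<Sum>x\<in>{0..<d}\<times>{0..<d}. of_bool (fst x = snd x) * h x) =
        (\<Sum>i\<in>{0..<d}. \<Sum>j\<in>{0..<d}. of_bool (i = j) * h (i,j))"
    by (subst sum.cartesian_product) (simp add: case_prod_beta')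
  also have "\<dots> = (\<Sum>i\<in>{0..<d}. \<Sum>j\<in>{0..<d}. if i = j then h (i,i) else 0)"
    by (intro sum.cong refl) auto
  also have "\<dots> = (\<Sum>i\<in>{0..<d}. h (i,i))"
    by (intro sum.cong refl) (simp add: sum.delta)
  finally show ?thesis by (simp add: atLeast0LessThan)
qed

lemma pt_entry':
  assumes "x \<in> {0..<d}\<times>{0..<d}" "y \<in> {0..<d}\<times>{0..<d}"
  shows "partial_transpose (rho_bc d b c) x y = complex_of_real
     ((acoef d b c - c) * of_bool (x = y \<and> fst x = snd x) + ((b + c) / 2) * of_bool (x = y)
      + ((c - b) / 2) * of_bool (fst x = snd x \<and> fst y = snd y))"
  using assms pt_entry[of "fst x" d "snd x" "fst y" "snd y" b c]
  by (cases x; cases y) auto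

lemma ob_mult: "of_bool P * (z::'a::comm_ring_1) = (if P then z else 0)" by simp
lemma ob_mult2: "of_bool (x = y \<and> P) * (z::'a::comm_ring_1) = (if x = y then (if P then z else 0) else 0)" by simp

lemma nsq: "(complex_of_real (cmod z))\<^sup>2 = z * cnj z"
  using complex_norm_square[of z] by simp

lemma qform_eq:
  "qform d (partial_transpose (rho_bc d b c)) \<phi> = complex_of_real
     ((acoef d b c - c) * (\<Sum>i<d. (cmod (\<phi> (i,i)))\<^sup>2)
      + ((b + c) / 2) * (\<Sum>x\<in>{0..<d}\<times>{0..<d}. (cmod (\<phi> x))\<^sup>2)
      + ((c - b) / 2) * (cmod (\<Sum>i<d. \<phi> (i,i)))\<^sup>2)"
proof -
  define A where "A = {0..<d}\<times>{0..<d}"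
  have fA: "finite A" unfolding A_def by simp
  define \<alpha> where "\<alpha> = complex_of_real (acoef d b c - c)"
  define \<beta> where "\<beta> = complex_of_real ((b + c) / 2)"
  define \<gamma> where "\<gamma> = complex_of_real ((c - b) / 2)"
  have "qform d (partial_transpose (rho_bc d b c)) \<phi> =
     (\<Sum>x\<in>A. \<Sum>y\<in>A. \<alpha> * (of_bool (x = y \<and> fst x = snd x) * (cnj (\<phi> x) * \<phi> y))
        + \<beta> * (of_bool (x = y) * (cnj (\<phi> x) * \<phi> y))
        + \<gamma> * (of_bool (fst x = snd x) * cnj (\<phi> x) * (of_bool (fst y = snd y) * \<phi> y)))"
    unfolding qform_def A_def
    apply (intro sum.cong refl)
    apply (subst pt_entry', assumption, assumption)
    apply (auto simp: \<alpha>_def \<beta>_def \<gamma>_def of_bool_def field_simps)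
    done
  also have "\<dots> = \<alpha> * (\<Sum>x\<in>A. \<Sum>y\<in>A. of_bool (x = y \<and> fst x = snd x) * (cnj (\<phi> x) * \<phi> y))
     + \<beta> * (\<Sum>x\<in>A. \<Sum>y\<in>A. of_bool (x = y) * (cnj (\<phi> x) * \<phi> y))
     + \<gamma> * ((\<Sum>x\<in>A. of_bool (fst x = snd x) * cnj (\<phi> x)) * (\<Sum>y\<in>A. of_bool (fst y = snd y) * \<phi> y))"
  proof -
    have g: "(\<Sum>x\<in>A. \<Sum>y\<in>A. \<gamma> * (of_bool (fst x = snd x) * cnj (\<phi> x) * (of_bool (fst y = snd y) * \<phi> y)))
      = \<gamma> * ((\<Sum>x\<in>A. of_bool (fst x = snd x) * cnj (\<phi> x)) * (\<Sum>y\<in>A. of_bool (fst y = snd y) * \<phi> y))"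
      unfolding sum_product by (simp only: sum_distrib_left)
    show ?thesis by (simp only: sum.distrib g sum_distrib_left)
  qed
  also have "(\<Sum>x\<in>A. \<Sum>y\<in>A. of_bool (x = y \<and> fst x = snd x) * (cnj (\<phi> x) * \<phi> y))
      = (\<Sum>x\<in>A. of_bool (fst x = snd x) * (cnj (\<phi> x) * \<phi> x))"
    by (intro sum.cong refl) (simp only: ob_mult2 ob_mult, simp add: fA)
  also have "\<dots> = (\<Sum>i<d. cnj (\<phi> (i,i)) * \<phi> (i,i))"
    unfolding A_def by (rule diag_sum)
  also have "(\<Sum>x\<in>A. \<Sum>y\<in>A. of_bool (x = y) * (cnj (\<phi> x) * \<phi> y)) = (\<Sum>x\<in>A. cnj (\<phi> x) * \<phi> x)"
    by (intro sum.cong refl) (simp only: ob_mult, simp add: fA)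
  also have "(\<Sum>x\<in>A. of_bool (fst x = snd x) * cnj (\<phi> x)) = cnj (\<Sum>i<d. \<phi> (i,i))"
    unfolding A_def diag_sum by simp
  also have "(\<Sum>y\<in>A. of_bool (fst y = snd y) * \<phi> y) = (\<Sum>i<d. \<phi> (i,i))"
    unfolding A_def diag_sum by simp
  finally show ?thesis
    unfolding \<alpha>_def \<beta>_def \<gamma>_def A_def
    by (simp add: of_real_sum nsq mult.commute)
qed


lemma cs_complex:
  fixes f g :: "nat \<Rightarrow> complex"
  shows "(cmod (\<Sum>i\<in>I. f i * g i))\<^sup>2 \<le> (\<Sum>i\<in>I. (cmod (f i))\<^sup>2) * (\<Sum>i\<in>I. (cmod (g i))\<^sup>2)"
proof -
  have "cmod (\<Sum>i\<in>I. f i * g i) \<le> (\<Sum>i\<in>I. cmod (f i) * cmod (g i))"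
    by (metis (no_types, lifting) norm_mult norm_sum sum.cong)
  then have "(cmod (\<Sum>i\<in>I. f i * g i))\<^sup>2 \<le> (\<Sum>i\<in>I. cmod (f i) * cmod (g i))\<^sup>2"
    by (intro power_mono) auto
  also have "\<dots> \<le> (\<Sum>i\<in>I. (cmod (f i))\<^sup>2) * (\<Sum>i\<in>I. (cmod (g i))\<^sup>2)"
    by (rule Cauchy_Schwarz_ineq_sum)
  finally show ?thesis .
qed

lemma orth_bound:
  fixes e0 e1 w0 w1 :: "nat \<Rightarrow> complex"
  assumes orth: "(\<Sum>i<d. cnj (e0 i) * e1 i) = 0"
  shows "(cmod (\<Sum>i<d. e0 i * w0 i + e1 i * w1 i))\<^sup>2 \<le>
           2 * (\<Sum>i<d. \<Sum>j<d. (cmod (e0 i * w0 j + e1 i * w1 j))\<^sup>2)"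
proof -
  define N where "N f = (\<Sum>i<d. (cmod (f i))\<^sup>2)" for f :: "nat \<Rightarrow> complex"
  have Nc: "complex_of_real (N f) = (\<Sum>i<d. f i * cnj (f i))" for f
    unfolding N_def of_real_sum complex_norm_square ..
  have o2: "(\<Sum>i<d. e1 i * cnj (e0 i)) = 0" using orth by (simp add: mult.commute)
  have o1: "(\<Sum>i<d. e0 i * cnj (e1 i)) = 0"
  proof -
    have "(\<Sum>i<d. e0 i * cnj (e1 i)) = cnj (\<Sum>i<d. cnj (e0 i) * e1 i)" by simp
    then show ?thesis using orth by simp
  qed
  have "complex_of_real (\<Sum>i<d. \<Sum>j<d. (cmod (e0 i * w0 j + e1 i * w1 j))\<^sup>2)
     = (\<Sum>i<d. \<Sum>j<d. (e0 i * cnj (e0 i)) * (w0 j * cnj (w0 j)) + (e1 i * cnj (e1 i)) * (w1 j * cnj (w1 j))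
          + (e0 i * cnj (e1 i)) * (w0 j * cnj (w1 j)) + (e1 i * cnj (e0 i)) * (w1 j * cnj (w0 j)))"
    unfolding of_real_sum complex_norm_square by (intro sum.cong refl) (simp add: algebra_simps)
  also have "\<dots> = (\<Sum>i<d. e0 i * cnj (e0 i)) * (\<Sum>j<d. w0 j * cnj (w0 j))
      + (\<Sum>i<d. e1 i * cnj (e1 i)) * (\<Sum>j<d. w1 j * cnj (w1 j))
      + (\<Sum>i<d. e0 i * cnj (e1 i)) * (\<Sum>j<d. w0 j * cnj (w1 j))
      + (\<Sum>i<d. e1 i * cnj (e0 i)) * (\<Sum>j<d. w1 j * cnj (w0 j))"
    by (simp only: sum_product sum.distrib)
  also have "\<dots> = complex_of_real (N e0 * N w0 + N e1 * N w1)"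
    unfolding o1 o2 of_real_add of_real_mult Nc by simp
  finally have F: "(\<Sum>i<d. \<Sum>j<d. (cmod (e0 i * w0 j + e1 i * w1 j))\<^sup>2) = N e0 * N w0 + N e1 * N w1"
    using of_real_eq_iff by blast
  define p where "p = cmod (\<Sum>i<d. e0 i * w0 i)"
  define q where "q = cmod (\<Sum>i<d. e1 i * w1 i)"
  have p2: "p\<^sup>2 \<le> N e0 * N w0" unfolding p_def N_def by (rule cs_complex)
  have q2: "q\<^sup>2 \<le> N e1 * N w1" unfolding q_def N_def by (rule cs_complex)
  have "cmod (\<Sum>i<d. e0 i * w0 i + e1 i * w1 i) \<le> p + q"
    unfolding p_def q_def sum.distrib by (rule norm_triangle_ineq)
  then have "(cmod (\<Sum>i<d. e0 i * w0 i + e1 i * w1 i))\<^sup>2 \<le> (p + q)\<^sup>2"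
    by (intro power_mono) auto
  also have "\<dots> \<le> 2 * (p\<^sup>2 + q\<^sup>2)"
    using sum_squares_ge_zero[of "p - q" 0] by (simp add: power2_eq_square algebra_simps)
  also have "\<dots> \<le> 2 * (N e0 * N w0 + N e1 * N w1)" using p2 q2 by simp
  finally show ?thesis unfolding F .
qed


lemma schmidt2_decomp:
  assumes "schmidt_rank d \<phi> = 2"
  obtains u v :: "nat \<Rightarrow> nat \<Rightarrow> complex" where
    "\<forall>i<d. \<forall>j<d. \<phi> (i, j) = (\<Sum>k<2. u k i * v k j)"
proof -
  let ?P = "\<lambda>r. \<exists>u v :: nat \<Rightarrow> nat \<Rightarrow> complex. \<forall>i<d. \<forall>j<d. \<phi> (i, j) = (\<Sum>k<r. u k i * v k j)"
  have ex: "?P d"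
  proof (intro exI allI impI)
    fix i j assume "i < d" "j < d"
    show "\<phi> (i, j) = (\<Sum>k<d. (\<lambda>k i. if k = i then 1 else 0) k i * (\<lambda>k j. \<phi> (k, j)) k j)"
    proof -
      have "(\<Sum>k<d. (\<lambda>k i. if k = i then 1 else 0) k i * (\<lambda>k j. \<phi> (k, j)) k j)
          = (\<Sum>k<d. if k = i then \<phi> (i, j) else 0)" by (intro sum.cong) auto
      then show ?thesis using \<open>i < d\<close> by simp
    qed
  qed
  have "?P (LEAST r. ?P r)" by (rule LeastI_ex) (use ex in blast)
  then have "?P 2" using assms unfolding schmidt_rank_def by simp
  then show ?thesis using that by blast
qed

lemma trace_bound_rank2:
  assumes "schmidt_rank d \<phi> = 2"
  shows "(cmod (\<Sum>i<d. \<phi> (i,i)))\<^sup>2 \<le> 2 * (\<Sum>x\<in>{0..<d}\<times>{0..<d}. (cmod (\<phi> x))\<^sup>2)"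
proof -
  obtain u v :: "nat \<Rightarrow> nat \<Rightarrow> complex" where uv: "\<forall>i<d. \<forall>j<d. \<phi> (i, j) = (\<Sum>k<2. u k i * v k j)"
    using schmidt2_decomp[OF assms] by blast
  define ip where "ip f g = (\<Sum>i<d. cnj (f i) * g i)" for f g :: "nat \<Rightarrow> complex"
  define \<mu> where "\<mu> = ip (u 0) (u 1) / ip (u 0) (u 0)"
  define e1 where "e1 i = u 1 i - \<mu> * u 0 i" for i
  define w0 where "w0 j = v 0 j + \<mu> * v 1 j" for j
  have phi: "\<phi> (i, j) = u 0 i * w0 j + e1 i * v 1 j" if "i < d" "j < d" for i j
    using uv that unfolding e1_def w0_def by (simp add: numeral_2_eq_2 algebra_simps)
  have orth: "(\<Sum>i<d. cnj (u 0 i) * e1 i) = 0"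
  proof (cases "ip (u 0) (u 0) = 0")
    case True
    have "complex_of_real (\<Sum>i<d. (cmod (u 0 i))\<^sup>2) = ip (u 0) (u 0)"
      unfolding ip_def of_real_sum complex_norm_square by (simp add: mult.commute)
    then have "complex_of_real (\<Sum>i<d. (cmod (u 0 i))\<^sup>2) = 0" using True by (simp only:)
    then have "(\<Sum>i<d. (cmod (u 0 i))\<^sup>2) = 0" by (simp only: of_real_eq_0_iff)
    then have "\<forall>i\<in>{..<d}. (cmod (u 0 i))\<^sup>2 = 0"
      by (subst sum_nonneg_eq_0_iff[symmetric]) auto
    then have "\<forall>i<d. u 0 i = 0" by simp
    then show ?thesis by simp
  next
    case False
    have "(\<Sum>i<d. cnj (u 0 i) * e1 i) = ip (u 0) (u 1) - \<mu> * ip (u 0) (u 0)"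
      unfolding ip_def e1_def by (simp add: algebra_simps sum_subtractf sum_distrib_left)
    also have "\<dots> = 0" unfolding \<mu>_def using False by simp
    finally show ?thesis .
  qed
  have "(cmod (\<Sum>i<d. u 0 i * w0 i + e1 i * v 1 i))\<^sup>2 \<le>
           2 * (\<Sum>i<d. \<Sum>j<d. (cmod (u 0 i * w0 j + e1 i * v 1 j))\<^sup>2)"
    by (rule orth_bound[OF orth])
  moreover have "(\<Sum>i<d. u 0 i * w0 i + e1 i * v 1 i) = (\<Sum>i<d. \<phi> (i,i))"
    using phi by simp
  moreover have "(\<Sum>i<d. \<Sum>j<d. (cmod (u 0 i * w0 j + e1 i * v 1 j))\<^sup>2) = (\<Sum>x\<in>{0..<d}\<times>{0..<d}. (cmod (\<phi> x))\<^sup>2)"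
    unfolding sum.cartesian_product' by (simp add: atLeast0LessThan phi)
  ultimately show ?thesis by simp
qed

lemma diag_le_full:
  fixes \<phi> :: bivec
  shows   "(\<Sum>i<d. (cmod (\<phi> (i,i)))\<^sup>2) \<le> (\<Sum>x\<in>{0..<d}\<times>{0..<d}. (cmod (\<phi> x))\<^sup>2)"
proof -
  have "(\<Sum>i<d. (cmod (\<phi> (i,i)))\<^sup>2) = (\<Sum>x\<in>(\<lambda>i. (i,i)) ` {..<d}. (cmod (\<phi> x))\<^sup>2)"
    by (subst sum.reindex) (auto simp: inj_on_def)
  also have "\<dots> \<le> (\<Sum>x\<in>{0..<d}\<times>{0..<d}. (cmod (\<phi> x))\<^sup>2)"
    by (rule sum_mono2) auto
  finally show ?thesis .
qed

lemma trace_le_diag: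
  fixes \<phi> :: bivec
  shows   "(cmod (\<Sum>i<d. \<phi> (i,i)))\<^sup>2 \<le> real d * (\<Sum>i<d. (cmod (\<phi> (i,i)))\<^sup>2)"
  using cs_complex[of "\<lambda>_. 1" "\<lambda>i. \<phi> (i,i)" "{..<d}"] by simp


definition Qf :: "real \<Rightarrow> real \<Rightarrow> real \<Rightarrow> real \<Rightarrow> real \<Rightarrow> real \<Rightarrow> real" where
  "Qf x D F T b c = ((1 / x) * (1 - (b + c) * (x * (x - 1) / 2)) - c) * D + ((b + c) / 2) * F + ((c - b) / 2) * T"

lemma Qf_affine:
  assumes "x \<noteq> 0"
  shows "Qf x D F T b c = D / x + inner (-(x-1)/2*D + F/2 - T/2, -(x-1)/2*D - D + F/2 + T/2) (b, c)"
  using assms unfolding Qf_def by (simp add: field_simps)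

lemma Qf_vertices:
  assumes x: "x \<ge> 2" and D: "0 \<le> D" "D \<le> F" and T1: "T \<le> x * D" and T2: "T \<le> 2 * F"
  shows "0 \<le> Qf x D F T (1 / (x * (x - 1))) 0"
    and "0 \<le> Qf x D F T (4 / (x * (3 * x - 2))) 0"
    and "0 \<le> Qf x D F T (3 / (x * (2 * x - 1))) (1 / (x * (2 * x - 1)))"
    and "0 \<le> Qf x D F T (1 / (x * (x - 1))) (1 / (x * (x - 1)))"
proof -
  have x0: "x \<noteq> 0" "x - 1 \<noteq> 0" "3 * x - 2 \<noteq> 0" "2 * x - 1 \<noteq> 0"
     "x * (x - 1) \<noteq> 0" "x * (3 * x - 2) \<noteq> 0" "x * (2 * x - 1) \<noteq> 0" using x by auto
  have xp: "0 < x * (x - 1)" "0 < x * (3 * x - 2)" "0 < x * (2 * x - 1)" using x by auto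
  have xD: "0 \<le> (x - 2) * D" using x D by simp
  define y where "y = 1 / x"
  have hy: "x * y = 1" unfolding y_def using x0 by simp
  define k1 where "k1 = 1 / (x * (x - 1))"
  have hk1: "k1 * (x * (x - 1)) = 1" unfolding k1_def using x0 by simp
  have k1p: "0 < k1" unfolding k1_def using xp by simp
  have e1: "2 * (x * (x - 1)) * Qf x D F T k1 0 = (x - 1) * D + F - T"
    unfolding Qf_def y_def[symmetric] using hy hk1 by algebra
  have "0 \<le> (x - 1) * D + F - T" using T1 T2 xD by (simp add: algebra_simps)
  then have "0 \<le> 2 * (x * (x - 1)) * Qf x D F T k1 0" using e1 by simp
  then show "0 \<le> Qf x D F T (1 / (x * (x - 1))) 0"
    unfolding k1_def[symmetric] using xp by (simp add: zero_le_mult_iff)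
  define k2 where "k2 = 1 / (x * (3 * x - 2))"
  have hk2: "k2 * (x * (3 * x - 2)) = 1" unfolding k2_def using x0 by simp
  have e2: "x * (3 * x - 2) * Qf x D F T (4 * k2) 0 = x * D + 2 * F - 2 * T"
    unfolding Qf_def y_def[symmetric] using hy hk2 by algebra
  have "0 \<le> x * D + 2 * F - 2 * T" using T1 T2 by simp
  then have "0 \<le> x * (3 * x - 2) * Qf x D F T (4 * k2) 0" using e2 by simp
  moreover have "4 * k2 = 4 / (x * (3 * x - 2))" unfolding k2_def by simp
  ultimately show "0 \<le> Qf x D F T (4 / (x * (3 * x - 2))) 0"
    using xp by (simp add: zero_le_mult_iff)
  define k3 where "k3 = 1 / (x * (2 * x - 1))"
  have hk3: "k3 * (x * (2 * x - 1)) = 1" unfolding k3_def using x0 by simp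
  have e3: "x * (2 * x - 1) * Qf x D F T (3 * k3) k3 = 2 * F - T"
    unfolding Qf_def y_def[symmetric] using hy hk3 by algebra
  have "0 \<le> 2 * F - T" using T2 by simp
  then have "0 \<le> x * (2 * x - 1) * Qf x D F T (3 * k3) k3" using e3 by simp
  moreover have "3 * k3 = 3 / (x * (2 * x - 1))" unfolding k3_def by simp
  ultimately show "0 \<le> Qf x D F T (3 / (x * (2 * x - 1))) (1 / (x * (2 * x - 1)))"
    using xp unfolding k3_def by (simp add: zero_le_mult_iff)
  define k where "k = 1 / (x * (x - 1))"
  have k0: "0 < k" unfolding k_def using xp by simp
  have hk: "(k + k) * (x * (x - 1) / 2) = 1" unfolding k_def using x0 by (simp add: field_simps)
  have e4: "Qf x D F T k k = k * (F - D)"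
    unfolding Qf_def hk by (simp add: algebra_simps)
  have "0 \<le> F - D" using D by simp
  then show "0 \<le> Qf x D F T (1 / (x * (x - 1))) (1 / (x * (x - 1)))"
    using e4 k0 unfolding k_def[symmetric] by simp
qed

theorem proposition1:
  fixes d :: nat and b c :: real
  assumes "d \<ge> 2"
    and "(b, c) \<in> convex hull
           {(1 / (real d * (real d - 1)), 0),
            (4 / (real d * (3 * real d - 2)), 0),
            (3 / (real d * (2 * real d - 1)), 1 / (real d * (2 * real d - 1))),
            (1 / (real d * (real d - 1)), 1 / (real d * (real d - 1)))}"
  shows "\<forall>\<phi> :: bivec. schmidt_rank d \<phi> = 2 \<longrightarrow>
           0 \<le> qform d (partial_transpose (rho_bc d b c)) \<phi>"
proof (intro allI impI)
  fix \<phi> :: bivec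
  assume sr: "schmidt_rank d \<phi> = 2"
  define x where "x = real d"
  define D where "D = (\<Sum>i<d. (cmod (\<phi> (i,i)))\<^sup>2)"
  define F where "F = (\<Sum>x\<in>{0..<d}\<times>{0..<d}. (cmod (\<phi> x))\<^sup>2)"
  define T where "T = (cmod (\<Sum>i<d. \<phi> (i,i)))\<^sup>2"
  have x2: "x \<ge> 2" using assms(1) unfolding x_def by simp
  have D0: "0 \<le> D" unfolding D_def by (simp add: sum_nonneg)
  have DF: "D \<le> F" unfolding D_def F_def by (rule diag_le_full)
  have T1: "T \<le> x * D" unfolding T_def x_def D_def by (rule trace_le_diag)
  have T2: "T \<le> 2 * F" unfolding T_def F_def by (rule trace_bound_rank2[OF sr])
  note V = Qf_vertices[OF x2 D0 DF T1 T2]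
  define S where "S = {p :: real \<times> real. 0 \<le> Qf x D F T (fst p) (snd p)}"
  have "S = {p. inner (-(x-1)/2*D + F/2 - T/2, -(x-1)/2*D - D + F/2 + T/2) p \<ge> - (D / x)}"
    unfolding S_def using Qf_affine[of x D F T] x2 by (auto simp: prod_eq_iff)
  then have cS: "convex S" by (simp add: convex_halfspace_ge)
  have "convex hull
           {(1 / (x * (x - 1)), 0),
            (4 / (x * (3 * x - 2)), 0),
            (3 / (x * (2 * x - 1)), 1 / (x * (2 * x - 1))),
            (1 / (x * (x - 1)), 1 / (x * (x - 1)))} \<subseteq> S"
    by (rule hull_minimal) (use V cS in \<open>auto simp: S_def\<close>)
  then have "(b, c) \<in> S" using assms(2) unfolding x_def by blast
  then have "0 \<le> Qf x D F T b c" unfolding S_def by simp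
  moreover have "qform d (partial_transpose (rho_bc d b c)) \<phi> = complex_of_real (Qf x D F T b c)"
    unfolding qform_eq Qf_def D_def F_def T_def x_def acoef_def ..
  ultimately show "0 \<le> qform d (partial_transpose (rho_bc d b c)) \<phi>"
    by (simp add: less_eq_complex_def)
qed

end
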